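(* In the binary setting, for any prior $\pi\in(0,1)$ and qualities $\tfrac12\le q_2<q_1\le1$, $$U_\pi(q_1)-U_\pi(q_2)\le\bar f(v_H-v_L)^2\Big[\tfrac23(q_1^3-q_2^3)-\tfrac12(q_1^2-q_2^2)\Big],\qquad \bar f=\sup_{p\in[v_L,v_H]}f(p).$$ Consequently, if a signal of quality $q_1$ costs more than this amount above the cost of a signal of quality $q_2$, the advertiser prefers (buying only) the signal of quality $q_2$ regardless of her prior.
   Context: Binary setting: a single advertiser bids in a second-price auction; the user is of type $H$ with prior $\pi$ and $L$ otherwise, values $v_H>v_L\ge0$; the highest competing bid is independent of type with density $f$ and cdf $F$. $U_\pi(q)$ denotes the advertiser's value (expected utility with the signal minus without) for a signal $s\in\{h,\ell\}$ of quality $q$, i.e. $\Pr[s=h\mid H]=\Pr[s=\ell\mid L]=q$; without data she bids $\pi v_H+(1-\pi)v_L$ and with the signal she bids her posterior expected value. *)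

theory Defs
  imports "HOL-Analysis.Analysis"
begin

text \<open>The highest competing bid has density f (on the reals,
  supported on the nonnegative reals). Expected utility of an advertiser whose
  (expected) value is v and who bids b in a second-price auction: she wins
  iff the competing bid p is below b and then pays p.\<close>

definition payoff :: "(real \<Rightarrow> real) \<Rightarrow> real \<Rightarrow> real \<Rightarrow> real" where
  "payoff f v b = (LINT p:{..<b}|lborel. (v - p) * f p)"

definition prob_h :: "real \<Rightarrow> real \<Rightarrow> real" where
  "prob_h \<pi> q = \<pi> * q + (1 - \<pi>) * (1 - q)"

definition prob_l :: "real \<Rightarrow> real \<Rightarrow> real" where
  "prob_l \<pi> q = \<pi> * (1 - q) + (1 - \<pi>) * q"

definition post_val_h :: "real \<Rightarrow> real \<Rightarrow> real \<Rightarrow> real \<Rightarrow> real" where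
  "post_val_h vH vL \<pi> q =
     (\<pi> * q / prob_h \<pi> q) * vH + ((1 - \<pi>) * (1 - q) / prob_h \<pi> q) * vL"

definition post_val_l :: "real \<Rightarrow> real \<Rightarrow> real \<Rightarrow> real \<Rightarrow> real" where
  "post_val_l vH vL \<pi> q =
     (\<pi> * (1 - q) / prob_l \<pi> q) * vH + ((1 - \<pi>) * q / prob_l \<pi> q) * vL"

definition prior_val :: "real \<Rightarrow> real \<Rightarrow> real \<Rightarrow> real" where
  "prior_val vH vL \<pi> = \<pi> * vH + (1 - \<pi>) * vL"

text \<open>Value U_pi(q) of a signal of quality q: expected utility with the signal
  (bidding the posterior expected value) minus expected utility without it
  (bidding the prior expected value).\<close>

definition signal_value ::
  "(real \<Rightarrow> real) \<Rightarrow> real \<Rightarrow> real \<Rightarrow> real \<Rightarrow> real \<Rightarrow> real" where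
  "signal_value f vH vL \<pi> q =
     prob_h \<pi> q * payoff f (post_val_h vH vL \<pi> q) (post_val_h vH vL \<pi> q)
   + prob_l \<pi> q * payoff f (post_val_l vH vL \<pi> q) (post_val_l vH vL \<pi> q)
   - payoff f (prior_val vH vL \<pi>) (prior_val vH vL \<pi>)"

end

theory Submission imports Defs begin

lemma tri_int:
  fixes y x :: real assumes "y \<le> x"
  shows "integral\<^sup>L lborel (\<lambda>p. indicator {y..x} p *\<^sub>R (x - p)) = (x-y)^2/2"
proof -
  have "integral\<^sup>L lborel (\<lambda>p. indicator {y..x} p *\<^sub>R (x - p)) = (x*x - x^2/2) - (x*y - y^2/2)"
    by (rule integral_FTC_atLeastAtMost[where F="\<lambda>p. x*p - p^2/2"])
       (auto intro!: derivative_eq_intros continuous_intros simp: has_real_derivative_iff_has_vector_derivative[symmetric] assms)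
  thus ?thesis by (simp add: power2_eq_square algebra_simps)
qed

lemma tri_int2:
  fixes y x :: real assumes "x \<le> y"
  shows "integral\<^sup>L lborel (\<lambda>p. indicator {x..y} p *\<^sub>R (p - x)) = (x-y)^2/2"
proof -
  have "integral\<^sup>L lborel (\<lambda>p. indicator {x..y} p *\<^sub>R (p - x)) = (y^2/2 - x*y) - (x^2/2 - x*x)"
    by (rule integral_FTC_atLeastAtMost[where F="\<lambda>p. p^2/2 - x*p"])
       (auto intro!: derivative_eq_intros continuous_intros simp: has_real_derivative_iff_has_vector_derivative[symmetric] assms)
  thus ?thesis by (simp add: power2_eq_square algebra_simps)
qed

definition Fc :: "(real \<Rightarrow> real) \<Rightarrow> real \<Rightarrow> real" where
  "Fc f y = integral\<^sup>L lborel (\<lambda>p. indicator {..<y} p * f p)"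

lemma payoff_alt: "payoff f v v = integral\<^sup>L lborel (\<lambda>p. indicator {..<v} p * ((v - p) * f p))"
  unfolding payoff_def set_lebesgue_integral_def by simp

lemma int_pay:
  fixes f :: "real \<Rightarrow> real" and v :: real
  assumes [measurable]: "f \<in> borel_measurable lborel" and nn: "\<And>p. f p \<ge> 0"
    and supp: "\<And>p. p < 0 \<Longrightarrow> f p = 0" and fi: "integrable lborel f"
  shows "integrable lborel (\<lambda>p. indicator {..<v} p * ((v - p) * f p))"
proof (rule Bochner_Integration.integrable_bound[where f="\<lambda>p. \<bar>v\<bar> * f p"])
  show "integrable lborel (\<lambda>p. \<bar>v\<bar> * f p)" using fi by simp
  show "(\<lambda>p. indicator {..<v} p * ((v - p) * f p)) \<in> borel_measurable lborel" by measurable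
  show "AE p in lborel. norm (indicator {..<v} p * ((v - p) * f p)) \<le> norm (\<bar>v\<bar> * f p)"
  proof (rule AE_I2)
    fix p
    show "norm (indicator {..<v} p * ((v - p) * f p)) \<le> norm (\<bar>v\<bar> * f p)"
    proof (cases "p < 0")
      case True thus ?thesis using supp by simp
    next
      case False
      thus ?thesis using nn[of p]
        by (auto simp: indicator_def abs_mult intro!: mult_right_mono)
    qed
  qed
qed

lemma int_F:
  fixes f :: "real \<Rightarrow> real" and v :: real
  assumes [measurable]: "f \<in> borel_measurable lborel" and nn: "\<And>p. f p \<ge> 0"
    and fi: "integrable lborel f"
  shows "integrable lborel (\<lambda>p. indicator {..<v} p * f p)"
proof (rule Bochner_Integration.integrable_bound[where f=f])
  show "AE p in lborel. norm (indicator {..<v} p * f p) \<le> norm (f p)"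
    using nn by (auto simp: indicator_def)
qed (use fi in auto)

lemma quad_bound:
  assumes [measurable]: "f \<in> borel_measurable lborel" and nn: "\<And>p. f p \<ge> 0"
    and supp: "\<And>p. p < 0 \<Longrightarrow> f p = 0" and fi: "integrable lborel f"
    and bd: "\<And>p. p \<in> {vL..vH} \<Longrightarrow> f p \<le> M"
    and x: "x \<in> {vL..vH}" and y: "y \<in> {vL..vH}"
  shows "payoff f x x \<le> payoff f y y + Fc f y * (x - y) + M/2 * (x - y)^2"
proof -
  note I = int_pay[OF assms(1-4)] int_F[OF assms(1,2,4)]
  have diff: "payoff f x x - payoff f y y - Fc f y * (x - y) =
     integral\<^sup>L lborel (\<lambda>p. indicator {..<x} p * ((x - p) * f p) - indicator {..<y} p * ((y - p) * f p)
        - (x - y) * (indicator {..<y} p * f p))"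
    unfolding payoff_alt Fc_def using I by (simp add: integral_diff)
  have M0: "0 \<le> M" using bd[OF x] nn[of x] by linarith
  show ?thesis
  proof (cases "y \<le> x")
    case True
    have "integral\<^sup>L lborel (\<lambda>p. indicator {..<x} p * ((x - p) * f p) - indicator {..<y} p * ((y - p) * f p)
        - (x - y) * (indicator {..<y} p * f p)) \<le> integral\<^sup>L lborel (\<lambda>p. M * (indicator {y..x} p *\<^sub>R (x - p)))"
    proof (rule integral_mono)
      show "integrable lborel (\<lambda>p. indicator {..<x} p * ((x - p) * f p) - indicator {..<y} p * ((y - p) * f p)
        - (x - y) * (indicator {..<y} p * f p))" using I by simp
      show "integrable lborel (\<lambda>p. M * (indicator {y..x} p *\<^sub>R (x - p)))"
        using borel_integrable_atLeastAtMost[of y x "\<lambda>p. x - p"] by (simp add: mult.commute)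
      fix p
      show "indicator {..<x} p * ((x - p) * f p) - indicator {..<y} p * ((y - p) * f p)
        - (x - y) * (indicator {..<y} p * f p) \<le> M * (indicator {y..x} p *\<^sub>R (x - p))"
      proof (cases "p < y")
        case True thus ?thesis using \<open>y \<le> x\<close> by (simp add: indicator_def algebra_simps)
      next
        case False
        hence "p \<in> {vL..vH} \<or> \<not> p < x" using x y by auto
        thus ?thesis using False bd[of p] nn[of p] M0
          by (auto simp: indicator_def intro!: mult_left_mono mult_right_mono)
      qed
    qed
    also have "\<dots> = M * ((x-y)^2/2)" using tri_int[OF True] by simp
    finally show ?thesis using diff by (simp add: algebra_simps)
  next
    case False
    have "integral\<^sup>L lborel (\<lambda>p. indicator {..<x} p * ((x - p) * f p) - indicator {..<y} p * ((y - p) * f p)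
        - (x - y) * (indicator {..<y} p * f p)) \<le> integral\<^sup>L lborel (\<lambda>p. M * (indicator {x..y} p *\<^sub>R (p - x)))"
    proof (rule integral_mono)
      show "integrable lborel (\<lambda>p. indicator {..<x} p * ((x - p) * f p) - indicator {..<y} p * ((y - p) * f p)
        - (x - y) * (indicator {..<y} p * f p))" using I by simp
      show "integrable lborel (\<lambda>p. M * (indicator {x..y} p *\<^sub>R (p - x)))"
        using borel_integrable_atLeastAtMost[of x y "\<lambda>p. p - x"] by (simp add: mult.commute)
      fix p
      show "indicator {..<x} p * ((x - p) * f p) - indicator {..<y} p * ((y - p) * f p)
        - (x - y) * (indicator {..<y} p * f p) \<le> M * (indicator {x..y} p *\<^sub>R (p - x))"
      proof (cases "p < x")
        case True thus ?thesis using False by (simp add: indicator_def algebra_simps)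
      next
        case pn: False
        show ?thesis
        proof (cases "p < y")
          case True
          hence "p \<in> {vL..vH}" using x y pn by auto
          hence "f p \<le> M" by (rule bd)
          hence "(p - x) * f p \<le> (p - x) * M" using pn by (intro mult_left_mono) auto
          thus ?thesis using True pn by (simp add: indicator_def algebra_simps)
        qed (use pn False M0 in \<open>simp add: indicator_def\<close>)
      qed
    qed
    also have "\<dots> = M * ((x-y)^2/2)" using tri_int2[of x y] False by simp
    finally show ?thesis using diff by (simp add: algebra_simps)
  qed
qed


lemma comb:
  fixes G D :: "real \<Rightarrow> real"
  assumes Q: "\<And>x y. x\<in>S \<Longrightarrow> y\<in>S \<Longrightarrow> G x \<le> G y + D y*(x-y) + K*(x-y)^2"
  and S: "x1\<in>S" "x2\<in>S" "y1\<in>S" "y2\<in>S"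
  and w: "w11 \<ge> 0" "w12 \<ge> 0" "w21 \<ge> 0" "w22 \<ge> 0"
  and s: "w11+w12 = P1" "w21+w22 = P2" "w11+w21 = R1" "w12+w22 = R2"
  and m: "w11*x1 + w21*x2 = R1*y1" "w12*x1 + w22*x2 = R2*y2"
  shows "P1*G x1 + P2*G x2 - R1*G y1 - R2*G y2 \<le> K*(P1*x1^2 + P2*x2^2 - R1*y1^2 - R2*y2^2)"
proof -
  have i1: "w11*G x1 \<le> w11*(G y1 + D y1*(x1-y1) + K*(x1-y1)^2)" by (rule mult_left_mono[OF Q]) (use S w in auto)
  have i2: "w12*G x1 \<le> w12*(G y2 + D y2*(x1-y2) + K*(x1-y2)^2)" by (rule mult_left_mono[OF Q]) (use S w in auto)
  have i3: "w21*G x2 \<le> w21*(G y1 + D y1*(x2-y1) + K*(x2-y1)^2)" by (rule mult_left_mono[OF Q]) (use S w in auto)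
  have i4: "w22*G x2 \<le> w22*(G y2 + D y2*(x2-y2) + K*(x2-y2)^2)" by (rule mult_left_mono[OF Q]) (use S w in auto)
  have lin: "w11*(D y1*(x1-y1)) + w21*(D y1*(x2-y1)) + w12*(D y2*(x1-y2)) + w22*(D y2*(x2-y2))
     = D y1*(w11*x1 + w21*x2 - (w11+w21)*y1) + D y2*(w12*x1 + w22*x2 - (w12+w22)*y2)"
    by (simp add: algebra_simps)
  also have "\<dots> = 0" using m s by simp
  finally have lin0: "w11*(D y1*(x1-y1)) + w21*(D y1*(x2-y1)) + w12*(D y2*(x1-y2)) + w22*(D y2*(x2-y2)) = 0" .
  have sq: "w11*(x1-y1)^2 + w12*(x1-y2)^2 + w21*(x2-y1)^2 + w22*(x2-y2)^2
     = (w11+w12)*x1^2 + (w21+w22)*x2^2 - 2*y1*(w11*x1 + w21*x2) - 2*y2*(w12*x1 + w22*x2)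
       + (w11+w21)*y1^2 + (w12+w22)*y2^2"
    by (simp add: algebra_simps power2_eq_square)
  also have "\<dots> = P1*x1^2 + P2*x2^2 - R1*y1^2 - R2*y2^2" using m s by (simp add: power2_eq_square algebra_simps)
  finally have sq0: "w11*(x1-y1)^2 + w12*(x1-y2)^2 + w21*(x2-y1)^2 + w22*(x2-y2)^2 = P1*x1^2 + P2*x2^2 - R1*y1^2 - R2*y2^2" .
  have "P1*G x1 + P2*G x2 = w11*G x1 + w12*G x1 + w21*G x2 + w22*G x2" unfolding s(1)[symmetric] s(2)[symmetric] by (simp add: algebra_simps)
  also have "\<dots> \<le> w11*(G y1 + D y1*(x1-y1) + K*(x1-y1)^2) + w12*(G y2 + D y2*(x1-y2) + K*(x1-y2)^2)
     + w21*(G y1 + D y1*(x2-y1) + K*(x2-y1)^2) + w22*(G y2 + D y2*(x2-y2) + K*(x2-y2)^2)"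
    using i1 i2 i3 i4 by linarith
  also have "\<dots> = (w11+w21)*G y1 + (w12+w22)*G y2
      + (w11*(D y1*(x1-y1)) + w21*(D y1*(x2-y1)) + w12*(D y2*(x1-y2)) + w22*(D y2*(x2-y2)))
      + K*(w11*(x1-y1)^2 + w12*(x1-y2)^2 + w21*(x2-y1)^2 + w22*(x2-y2)^2)"
    by (simp add: algebra_simps)
  also have "\<dots> = R1*G y1 + R2*G y2 + K*(P1*x1^2 + P2*x2^2 - R1*y1^2 - R2*y2^2)"
    using lin0 sq0 s by simp
  finally show ?thesis by simp
qed

lemma persq:
  fixes a q vH vL :: real
  assumes ph: "ph = a*q + (1-a)*(1-q)" and pl: "pl = a*(1-q) + (1-a)*q"
    and php: "ph > 0" and plp: "pl > 0"
  shows "ph*((a*q * vH + (1-a)*(1-q) * vL)/ph)^2 + pl*((a*(1-q) * vH + (1-a)*q * vL)/pl)^2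
     = vL^2 + 2* vL*(vH-vL)*a + (vH-vL)^2*(a^2 + a^2*(1-a)^2*(2*q-1)^2/(ph*pl))"
proof -
  define A where "A = a*q * vH + (1-a)*(1-q) * vL"
  define B where "B = a*(1-q) * vH + (1-a)*q * vL"
  have e1: "ph*(A/ph)^2 + pl*(B/pl)^2 = (A^2*pl + B^2*ph)/(ph*pl)"
    using php plp by (simp add: field_simps power2_eq_square)
  have poly: "A^2*pl + B^2*ph = (vL^2 + 2* vL*(vH-vL)*a + (vH-vL)^2*a^2)*(ph*pl) + (vH-vL)^2*a^2*(1-a)^2*(2*q-1)^2"
    unfolding ph pl A_def B_def by algebra
  have "ph*(A/ph)^2 + pl*(B/pl)^2 = vL^2 + 2* vL*(vH-vL)*a + (vH-vL)^2*(a^2 + a^2*(1-a)^2*(2*q-1)^2/(ph*pl))"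
    unfolding e1 poly using php plp by (simp add: field_simps)
  thus ?thesis unfolding A_def B_def .
qed

lemma pprod:
  fixes a q :: real
  shows "(a*q + (1-a)*(1-q)) * (a*(1-q) + (1-a)*q) = a*(1-a) + (2*a-1)^2/4*(1 - (2*q-1)^2)"
  by (simp add: field_simps power2_eq_square)


lemma cvx_in:
  fixes al be vH vL :: real
  assumes "al \<ge> 0" "be \<ge> 0" "al + be > 0" "vL < vH"
  shows "(al/(al+be)) * vH + (be/(al+be)) * vL \<in> {vL..vH}"
proof -
  have ne: "al+be \<noteq> 0" using assms by simp
  have one: "al/(al+be) + be/(al+be) = 1" using ne by (simp add: add_divide_distrib[symmetric])
  have b: "be/(al+be) = 1 - al/(al+be)" using one by linarith
  have e: "(al/(al+be)) * vH + (be/(al+be)) * vL = vL + (al/(al+be))*(vH-vL)"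
    unfolding b by (simp add: algebra_simps diff_divide_distrib)
  have t0: "al/(al+be) \<ge> 0" and t1: "al/(al+be) \<le> 1" using assms by auto
  have "0 \<le> (al/(al+be))*(vH-vL)" using t0 assms by simp
  moreover have "(al/(al+be))*(vH-vL) \<le> 1*(vH-vL)"
    by (rule mult_right_mono[OF t1]) (use assms in simp)
  ultimately
  show ?thesis unfolding e by auto
qed

lemma final_alg:
  fixes a d1 d2 :: real
  assumes a: "0 < a" "a < 1" and d: "0 \<le> d2" "d2 < d1" "d1 \<le> 1"
    and P1: "P1 = a*(1-a) + (2*a-1)^2/4*(1 - d1^2)"
    and P2: "P2 = a*(1-a) + (2*a-1)^2/4*(1 - d2^2)"
  shows "a^2*(1-a)^2*(d1^2/P1 - d2^2/P2) \<le> (d1^2 - d2^2)/4"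
proof -
  have ab: "a*(1-a) > 0" using a by simp
  have d1s: "d1^2 \<le> 1" using d by (simp add: power_le_one)
  have d2s: "d2^2 \<le> 1" using d by (simp add: power_le_one)
  have c1: "(2*a-1)^2/4*(1 - d1^2) \<ge> 0" using d1s by simp
  have c2: "(2*a-1)^2/4*(1 - d2^2) \<ge> 0" using d2s by simp
  have g1: "P1 \<ge> a*(1-a)" using c1 P1 by simp
  have g2: "P2 \<ge> a*(1-a)" using c2 P2 by simp
  have p1: "P1 > 0" "P2 > 0" using g1 g2 ab by linarith+
  have X: "d1^2 - d2^2 \<ge> 0" using d by (simp add: power_mono)
  have "d1^2/P1 - d2^2/P2 = (d1^2*P2 - d2^2*P1)/(P1*P2)" using p1 by (simp add: field_simps)
  also have "d1^2*P2 - d2^2*P1 = (d1^2 - d2^2)/4" unfolding P1 P2 by (simp add: field_simps power2_eq_square)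
  finally have e: "d1^2/P1 - d2^2/P2 = (d1^2 - d2^2)/4/(P1*P2)" .
  have "a^2*(1-a)^2 = (a*(1-a))*(a*(1-a))" by (simp add: power2_eq_square)
  also have "\<dots> \<le> P1*P2" using g1 g2 ab by (intro mult_mono) auto
  finally have le: "a^2*(1-a)^2 \<le> P1*P2" .
  have "a^2*(1-a)^2*(d1^2/P1 - d2^2/P2) = (a^2*(1-a)^2/(P1*P2)) * ((d1^2 - d2^2)/4)"
    unfolding e by simp
  also have "\<dots> \<le> 1 * ((d1^2 - d2^2)/4)"
    using le p1 X by (intro mult_right_mono) (auto simp: divide_le_eq)
  finally show ?thesis by simp
qed

theorem mainTheorem16:
  fixes f :: "real \<Rightarrow> real" and vH vL \<pi> q1 q2 c1 c2 :: real
  assumes f_meas: "f \<in> borel_measurable lborel"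
    and f_nonneg: "\<And>p. f p \<ge> 0"
    and f_supp: "\<And>p. p < 0 \<Longrightarrow> f p = 0"
    and f_int: "integrable lborel f"
    and f_total: "integral\<^sup>L lborel f = 1"
    and f_bdd: "bdd_above (f ` {vL..vH})"
    and vals: "0 \<le> vL" "vL < vH"
    and prior: "0 < \<pi>" "\<pi> < 1"
    and quals: "1/2 \<le> q2" "q2 < q1" "q1 \<le> 1"
  shows "signal_value f vH vL \<pi> q1 - signal_value f vH vL \<pi> q2
           \<le> Sup (f ` {vL..vH}) * (vH - vL)^2
               * (2/3 * (q1^3 - q2^3) - 1/2 * (q1^2 - q2^2))
       \<and> (c1 - c2 > Sup (f ` {vL..vH}) * (vH - vL)^2
               * (2/3 * (q1^3 - q2^3) - 1/2 * (q1^2 - q2^2))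
          \<longrightarrow> signal_value f vH vL \<pi> q2 - c2 > signal_value f vH vL \<pi> q1 - c1)"
proof -
  define M where "M = Sup (f ` {vL..vH})"
  define S where "S = {vL..vH}"
  define G where "G = (\<lambda>v. payoff f v v)"
  have bd: "\<And>p. p \<in> {vL..vH} \<Longrightarrow> f p \<le> M"
    unfolding M_def using f_bdd by (intro cSup_upper) auto
  have M0: "M \<ge> 0" using bd[of vL] f_nonneg[of vL] vals by auto
  have Q: "\<And>x y. x\<in>S \<Longrightarrow> y\<in>S \<Longrightarrow> G x \<le> G y + Fc f y*(x-y) + (M/2)*(x-y)^2"
    unfolding G_def S_def using quad_bound[OF f_meas f_nonneg f_supp f_int bd] by auto
  define ph1 where "ph1 = prob_h \<pi> q1"
  define pl1 where "pl1 = prob_l \<pi> q1"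
  define ph2 where "ph2 = prob_h \<pi> q2"
  define pl2 where "pl2 = prob_l \<pi> q2"
  have pos: "\<And>q. 1/2 \<le> q \<Longrightarrow> q \<le> 1 \<Longrightarrow> prob_h \<pi> q > 0 \<and> prob_l \<pi> q > 0"
  proof -
    fix q :: real assume q: "1/2 \<le> q" "q \<le> 1"
    have "\<pi>*q > 0" "(1-\<pi>)*(1-q) \<ge> 0" "\<pi>*(1-q) \<ge> 0" "(1-\<pi>)*q > 0" using q prior by auto
    thus "prob_h \<pi> q > 0 \<and> prob_l \<pi> q > 0" unfolding prob_h_def prob_l_def by linarith
  qed
  have php: "ph1 > 0" "pl1 > 0" "ph2 > 0" "pl2 > 0"
    unfolding ph1_def pl1_def ph2_def pl2_def using pos quals by auto
  define x1 where "x1 = post_val_h vH vL \<pi> q1"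
  define x2 where "x2 = post_val_l vH vL \<pi> q1"
  define y1 where "y1 = post_val_h vH vL \<pi> q2"
  define y2 where "y2 = post_val_l vH vL \<pi> q2"
  have inS: "x1 \<in> S" "x2 \<in> S" "y1 \<in> S" "y2 \<in> S"
    unfolding S_def x1_def x2_def y1_def y2_def post_val_h_def post_val_l_def
    using cvx_in[of "\<pi>*q1" "(1-\<pi>)*(1-q1)" vL vH] cvx_in[of "\<pi>*(1-q1)" "(1-\<pi>)*q1" vL vH]
      cvx_in[of "\<pi>*q2" "(1-\<pi>)*(1-q2)" vL vH] cvx_in[of "\<pi>*(1-q2)" "(1-\<pi>)*q2" vL vH]
      php prior quals vals unfolding ph1_def pl1_def ph2_def pl2_def prob_h_def prob_l_def
    by auto
  have xe: "x1 = (\<pi>*q1 * vH + (1-\<pi>)*(1-q1) * vL)/ph1" "x2 = (\<pi>*(1-q1) * vH + (1-\<pi>)*q1 * vL)/pl1"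
     "y1 = (\<pi>*q2 * vH + (1-\<pi>)*(1-q2) * vL)/ph2" "y2 = (\<pi>*(1-q2) * vH + (1-\<pi>)*q2 * vL)/pl2"
    unfolding x1_def x2_def y1_def y2_def post_val_h_def post_val_l_def ph1_def pl1_def ph2_def pl2_def
    by (simp_all add: add_divide_distrib)
  define e where "e = (q1-q2)/(2*q1-1)"
  have dpos: "2*q1-1 > 0" using quals by simp
  have e01: "0 \<le> e" "e \<le> 1" unfolding e_def using quals dpos by (auto simp: divide_le_eq)
  have ee: "e*(2*q1-1) = q1-q2" unfolding e_def using dpos by simp
  have "q1*(1-e) + (1-q1)*e = q1 - e*(2*q1-1)" by (simp add: algebra_simps)
  hence hq2: "q2 = q1*(1-e) + (1-q1)*e" using ee by linarith
  have m1: "(ph1*(1-e))*x1 + (pl1*e)*x2 = ph2*y1"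
  proof -
    have "(ph1*(1-e))*x1 + (pl1*e)*x2 = (1-e)*(\<pi>*q1 * vH + (1-\<pi>)*(1-q1) * vL) + e*(\<pi>*(1-q1) * vH + (1-\<pi>)*q1 * vL)"
      using php unfolding xe by simp
    also have "\<dots> = \<pi>*q2 * vH + (1-\<pi>)*(1-q2) * vL" unfolding hq2 by (simp add: algebra_simps)
    also have "\<dots> = ph2*y1" using php unfolding xe by simp
    finally show ?thesis .
  qed
  have m2: "(ph1*e)*x1 + (pl1*(1-e))*x2 = pl2*y2"
  proof -
    have "(ph1*e)*x1 + (pl1*(1-e))*x2 = e*(\<pi>*q1 * vH + (1-\<pi>)*(1-q1) * vL) + (1-e)*(\<pi>*(1-q1) * vH + (1-\<pi>)*q1 * vL)"
      using php unfolding xe by simp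
    also have "\<dots> = \<pi>*(1-q2) * vH + (1-\<pi>)*q2 * vL" unfolding hq2 by (simp add: algebra_simps)
    also have "\<dots> = pl2*y2" using php unfolding xe by simp
    finally show ?thesis .
  qed
  have s3: "ph1*(1-e) + pl1*e = ph2" unfolding ph1_def pl1_def ph2_def prob_h_def prob_l_def hq2
    by (simp add: algebra_simps)
  have s4: "ph1*e + pl1*(1-e) = pl2" unfolding ph1_def pl1_def pl2_def prob_h_def prob_l_def hq2
    by (simp add: algebra_simps)
  have comb1: "ph1*G x1 + pl1*G x2 - ph2*G y1 - pl2*G y2 \<le> (M/2)*(ph1*x1^2 + pl1*x2^2 - ph2*y1^2 - pl2*y2^2)"
    by (rule comb[OF Q inS, of "ph1*(1-e)" "ph1*e" "pl1*e" "pl1*(1-e)"])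
       (use php e01 s3 s4 m1 m2 in \<open>auto simp: algebra_simps\<close>)
  have sv: "signal_value f vH vL \<pi> q1 - signal_value f vH vL \<pi> q2 = ph1*G x1 + pl1*G x2 - ph2*G y1 - pl2*G y2"
    unfolding signal_value_def G_def ph1_def pl1_def ph2_def pl2_def x1_def x2_def y1_def y2_def by simp
  define P1 where "P1 = ph1*pl1"
  define P2 where "P2 = ph2*pl2"
  have sq1: "ph1*x1^2 + pl1*x2^2 = vL^2 + 2* vL*(vH-vL)*\<pi> + (vH-vL)^2*(\<pi>^2 + \<pi>^2*(1-\<pi>)^2*(2*q1-1)^2/P1)"
    unfolding xe P1_def by (rule persq) (use php in \<open>auto simp: ph1_def pl1_def prob_h_def prob_l_def\<close>)
  have sq2: "ph2*y1^2 + pl2*y2^2 = vL^2 + 2* vL*(vH-vL)*\<pi> + (vH-vL)^2*(\<pi>^2 + \<pi>^2*(1-\<pi>)^2*(2*q2-1)^2/P2)"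
    unfolding xe P2_def by (rule persq) (use php in \<open>auto simp: ph2_def pl2_def prob_h_def prob_l_def\<close>)
  have diffsq: "ph1*x1^2 + pl1*x2^2 - ph2*y1^2 - pl2*y2^2
      = (vH-vL)^2*(\<pi>^2*(1-\<pi>)^2*((2*q1-1)^2/P1 - (2*q2-1)^2/P2))"
    using sq1 sq2 by (simp add: algebra_simps)
  have fa: "\<pi>^2*(1-\<pi>)^2*((2*q1-1)^2/P1 - (2*q2-1)^2/P2) \<le> ((2*q1-1)^2 - (2*q2-1)^2)/4"
    by (rule final_alg) (use prior quals pprod in \<open>auto simp: P1_def P2_def ph1_def pl1_def ph2_def pl2_def prob_h_def prob_l_def\<close>)
  have Rge: "((2*q1-1)^2 - (2*q2-1)^2)/8 \<le> 2/3 * (q1^3 - q2^3) - 1/2 * (q1^2 - q2^2)"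
  proof -
    have c: "(2*q2-1)^3 \<le> (2*q1-1)^3" using quals by (intro power_mono) auto
    have eq:  "2/3 * (q1^3 - q2^3) - 1/2 * (q1^2 - q2^2) = ((2*q1-1)^3 - (2*q2-1)^3)/12 + ((2*q1-1)^2 - (2*q2-1)^2)/8"
      by (simp add: field_simps power2_eq_square power3_eq_cube)
    have nn: "0 \<le> ((2*q1-1)^3 - (2*q2-1)^3)/12" using c by simp
    show ?thesis unfolding eq using nn by simp
  qed
  have V0: "(vH-vL)^2 \<ge> 0" by simp
  have "signal_value f vH vL \<pi> q1 - signal_value f vH vL \<pi> q2 \<le> (M/2)*((vH-vL)^2*(((2*q1-1)^2 - (2*q2-1)^2)/4))"
  proof -
    have "(vH-vL)^2*(\<pi>^2*(1-\<pi>)^2*((2*q1-1)^2/P1 - (2*q2-1)^2/P2)) \<le> (vH-vL)^2*(((2*q1-1)^2 - (2*q2-1)^2)/4)"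
      by (rule mult_left_mono[OF fa V0])
    hence "(M/2)*((vH-vL)^2*(\<pi>^2*(1-\<pi>)^2*((2*q1-1)^2/P1 - (2*q2-1)^2/P2))) \<le> (M/2)*((vH-vL)^2*(((2*q1-1)^2 - (2*q2-1)^2)/4))"
      by (rule mult_left_mono) (use M0 in simp)
    thus ?thesis using comb1 unfolding sv diffsq by linarith
  qed
  also have "\<dots> = M*(vH-vL)^2*(((2*q1-1)^2 - (2*q2-1)^2)/8)" by simp
  also have "\<dots> \<le> M*(vH-vL)^2*(2/3 * (q1^3 - q2^3) - 1/2 * (q1^2 - q2^2))"
    using Rge M0 by (intro mult_left_mono) auto
  finally have main: "signal_value f vH vL \<pi> q1 - signal_value f vH vL \<pi> q2 \<le> M*(vH-vL)^2*(2/3 * (q1^3 - q2^3) - 1/2 * (q1^2 - q2^2))" .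
  show ?thesis using main unfolding M_def by auto
qed

end
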